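(* Let $K:X\times X\to\mathbb{R}$ be positive definite and $S\subset X$ a countable subset with $\delta_x\in\mathscr{H}(K^{(S)})$ for all $x\in S$, where $K^{(S)}=K|_{S\times S}$. Let $\Delta$ be the graph Laplacian $(\Delta h)(x)=\langle\delta_x,h\rangle_{\mathscr{H}(K^{(S)})}$ for $x\in S$, $h\in\mathscr{H}(K^{(S)})$. For finite $F\subset S$ let $K_F=(K(x,y))_{x,y\in F}$ and let $P_F$ be the orthogonal projection of $\mathscr{H}(K^{(S)})$ onto $\mathrm{span}\{K^{(S)}(\cdot,y):y\in F\}$. Then, for every $h\in\mathscr{H}(K^{(S)})$: (1) $\|h\|^2_{\mathscr{H}(K^{(S)})}=\sup_F\langle h|_F,(\Delta P_Fh)|_F\rangle_{\ell^2(F)}=\sup_F\langle h|_F,K_F^{-1}(h|_F)\rangle_{\ell^2(F)}$, the suprema over all finite $F\subset S$; (2) for every finite $F\subset S$ and $x\in F$, $(\Delta(P_Fh))(x)=(K_F^{-1}(h|_F))(x)$; (3) for every finite $F\subset S$, $K_F\big((\Delta P_Fh)|_F\big)=h|_F$.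
   Context: $\delta_x$ is the function on $S$ equal to $1$ at $x$ and $0$ elsewhere; $\mathscr{H}(K^{(S)})$ is the reproducing kernel Hilbert space of $K^{(S)}$ on $S$ (completion of the span of $K^{(S)}(\cdot,s)$, $\langle K^{(S)}(\cdot,s),K^{(S)}(\cdot,t)\rangle=K(s,t)$, $\langle K^{(S)}(\cdot,s),h\rangle=h(s)$). Under the hypothesis, each $K_F$ is invertible. *)

theory Defs
  imports "HOL-Analysis.Analysis"
begin

definition pos_def_kernel :: "('a \<Rightarrow> 'a \<Rightarrow> real) \<Rightarrow> bool" where
  "pos_def_kernel K \<longleftrightarrow> (\<forall>x y. K x y = K y x) \<and>
     (\<forall>F c. finite F \<longrightarrow> (\<Sum>x\<in>F. \<Sum>y\<in>F. c x * c y * K x y) \<ge> 0)"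

definition kfun :: "('a \<Rightarrow> 'a \<Rightarrow> real) \<Rightarrow> 'a set \<Rightarrow> 'a set \<times> ('a \<Rightarrow> real) \<Rightarrow> 'a \<Rightarrow> real" where
  "kfun K S a = (\<lambda>x. if x \<in> S then (\<Sum>y\<in>fst a. snd a y * K x y) else 0)"

definition kip :: "('a \<Rightarrow> 'a \<Rightarrow> real) \<Rightarrow> 'a set \<times> ('a \<Rightarrow> real) \<Rightarrow> 'a set \<times> ('a \<Rightarrow> real) \<Rightarrow> real" where
  "kip K a b = (\<Sum>y\<in>fst a. \<Sum>z\<in>fst b. snd a y * snd b z * K y z)"

definition kdist2 :: "('a \<Rightarrow> 'a \<Rightarrow> real) \<Rightarrow> 'a set \<times> ('a \<Rightarrow> real) \<Rightarrow> 'a set \<times> ('a \<Rightarrow> real) \<Rightarrow> real" where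
  "kdist2 K a b = kip K a a - 2 * kip K a b + kip K b b"

text \<open>A sequence of finite combinations (supported in S) that is Cauchy in the
  pre-Hilbert norm and converges pointwise to h: it represents h as an element
  of the completion H(K^(S)).\<close>
definition approx_seq :: "('a \<Rightarrow> 'a \<Rightarrow> real) \<Rightarrow> 'a set \<Rightarrow> ('a \<Rightarrow> real) \<Rightarrow> (nat \<Rightarrow> 'a set \<times> ('a \<Rightarrow> real)) \<Rightarrow> bool" where
  "approx_seq K S h a \<longleftrightarrow>
     (\<forall>n. finite (fst (a n)) \<and> fst (a n) \<subseteq> S) \<and>
     (\<forall>e>0. \<exists>N. \<forall>m\<ge>N. \<forall>n\<ge>N. kdist2 K (a m) (a n) < e) \<and>
     (\<forall>x. (\<lambda>n. kfun K S (a n) x) \<longlonglongrightarrow> h x)"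

definition rkhs :: "('a \<Rightarrow> 'a \<Rightarrow> real) \<Rightarrow> 'a set \<Rightarrow> ('a \<Rightarrow> real) set" where
  "rkhs K S = {h. \<exists>a. approx_seq K S h a}"

definition rkhs_inner :: "('a \<Rightarrow> 'a \<Rightarrow> real) \<Rightarrow> 'a set \<Rightarrow> ('a \<Rightarrow> real) \<Rightarrow> ('a \<Rightarrow> real) \<Rightarrow> real" where
  "rkhs_inner K S h g = (THE r. \<forall>a b. approx_seq K S h a \<longrightarrow> approx_seq K S g b \<longrightarrow>
                                   (\<lambda>n. kip K (a n) (b n)) \<longlonglongrightarrow> r)"

definition kcol :: "('a \<Rightarrow> 'a \<Rightarrow> real) \<Rightarrow> 'a set \<Rightarrow> 'a \<Rightarrow> 'a \<Rightarrow> real" where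
  "kcol K S y = (\<lambda>x. if x \<in> S then K x y else 0)"

definition kspan :: "('a \<Rightarrow> 'a \<Rightarrow> real) \<Rightarrow> 'a set \<Rightarrow> 'a set \<Rightarrow> ('a \<Rightarrow> real) set" where
  "kspan K S F = {kfun K S (F, c) | c. True}"

definition proj :: "('a \<Rightarrow> 'a \<Rightarrow> real) \<Rightarrow> 'a set \<Rightarrow> 'a set \<Rightarrow> ('a \<Rightarrow> real) \<Rightarrow> ('a \<Rightarrow> real)" where
  "proj K S F h = (THE g. g \<in> kspan K S F \<and>
      (\<forall>y\<in>F. rkhs_inner K S (\<lambda>x. h x - g x) (kcol K S y) = 0))"

definition delta :: "'a \<Rightarrow> 'a \<Rightarrow> real" where
  "delta x = (\<lambda>y. if y = x then 1 else 0)"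

definition laplacian :: "('a \<Rightarrow> 'a \<Rightarrow> real) \<Rightarrow> 'a set \<Rightarrow> ('a \<Rightarrow> real) \<Rightarrow> 'a \<Rightarrow> real" where
  "laplacian K S h = (\<lambda>x. if x \<in> S then rkhs_inner K S (delta x) h else 0)"

definition kmat_inv_apply :: "('a \<Rightarrow> 'a \<Rightarrow> real) \<Rightarrow> 'a set \<Rightarrow> ('a \<Rightarrow> real) \<Rightarrow> 'a \<Rightarrow> real" where
  "kmat_inv_apply K F v = (THE u. (\<forall>x. x \<notin> F \<longrightarrow> u x = 0) \<and>
      (\<forall>x\<in>F. (\<Sum>y\<in>F. K x y * u y) = v x))"

end

theory Submission imports Defs begin

definition ce :: "'a set \<times> ('a \<Rightarrow> real) \<Rightarrow> 'a \<Rightarrow> real" where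
  "ce a y = (if y \<in> fst a then snd a y else 0)"
definition csub :: "'a set \<times> ('a \<Rightarrow> real) \<Rightarrow> 'a set \<times> ('a \<Rightarrow> real) \<Rightarrow> 'a set \<times> ('a \<Rightarrow> real)" where
  "csub a b = (fst a \<union> fst b, \<lambda>y. ce a y - ce b y)"
definition csc :: "real \<Rightarrow> 'a set \<times> ('a \<Rightarrow> real) \<Rightarrow> 'a set \<times> ('a \<Rightarrow> real)" where
  "csc t b = (fst b, \<lambda>y. t * snd b y)"
definition cn :: "('a \<Rightarrow> 'a \<Rightarrow> real) \<Rightarrow> 'a set \<times> ('a \<Rightarrow> real) \<Rightarrow> real" where
  "cn K a = sqrt (kip K a a)"

lemma fst_csub[simp]: "fst (csub a b) = fst a \<union> fst b" by (simp add: csub_def)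
lemma fst_csc[simp]: "fst (csc t b) = fst b" by (simp add: csc_def)
lemma ce_csub: "ce (csub a b) y = ce a y - ce b y" by (simp add: ce_def csub_def)

lemma pdk_sym: "pos_def_kernel K \<Longrightarrow> K x y = K y x" by (simp add: pos_def_kernel_def)

lemma kip_nonneg: "pos_def_kernel K \<Longrightarrow> finite (fst a) \<Longrightarrow> 0 \<le> kip K a a"
  unfolding pos_def_kernel_def kip_def by blast

lemma kip_left: "kip K a b = (\<Sum>y\<in>fst a. snd a y * (\<Sum>z\<in>fst b. snd b z * K y z))"
  unfolding kip_def by (simp add: sum_distrib_left mult.assoc)

lemma sum_ce: "finite V \<Longrightarrow> fst a \<subseteq> V \<Longrightarrow> (\<Sum>y\<in>V. ce a y * f y) = (\<Sum>y\<in>fst a. snd a y * f y)"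
proof -
  assume V: "finite V" "fst a \<subseteq> V"
  have "(\<Sum>y\<in>V. ce a y * f y) = (\<Sum>y\<in>V. if y \<in> fst a then snd a y * f y else 0)"
    by (rule sum.cong) (auto simp: ce_def)
  also have "\<dots> = (\<Sum>y\<in>V \<inter> fst a. snd a y * f y)" using V by (simp add: sum.inter_restrict)
  also have "V \<inter> fst a = fst a" using V by auto
  finally show ?thesis .
qed

lemma kip_csub_left: "finite (fst a) \<Longrightarrow> finite (fst b) \<Longrightarrow> kip K (csub a b) c = kip K a c - kip K b c"
proof -
  assume f: "finite (fst a)" "finite (fst b)"
  define G where "G y = (\<Sum>z\<in>fst c. snd c z * K y z)" for y
  have "kip K (csub a b) c = (\<Sum>y\<in>fst a \<union> fst b. (ce a y - ce b y) * G y)"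
    by (simp add: kip_left G_def csub_def)
  also have "\<dots> = (\<Sum>y\<in>fst a \<union> fst b. ce a y * G y) - (\<Sum>y\<in>fst a \<union> fst b. ce b y * G y)"
    by (simp add: left_diff_distrib sum_subtractf)
  also have "\<dots> = kip K a c - kip K b c"
    using f by (simp add: sum_ce kip_left G_def)
  finally show ?thesis .
qed

lemma kip_sym: "pos_def_kernel K \<Longrightarrow> kip K a b = kip K b a"
  unfolding kip_def
  apply (subst sum.swap)
  apply (intro sum.cong refl)
  apply (simp add: mult.commute mult.left_commute)
  by (metis pdk_sym)

lemma kip_csub_right: "pos_def_kernel K \<Longrightarrow> finite (fst a) \<Longrightarrow> finite (fst b) \<Longrightarrow> kip K c (csub a b) = kip K c a - kip K c b"
  by (metis kip_csub_left kip_sym)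

lemma kip_csc_left: "kip K (csc t a) b = t * kip K a b"
  unfolding kip_left csc_def by (simp add: sum_distrib_left mult.assoc)

lemma kip_csc_right: "pos_def_kernel K \<Longrightarrow> kip K b (csc t a) = t * kip K b a"
  by (metis kip_csc_left kip_sym)

lemma kdist2_csub: "pos_def_kernel K \<Longrightarrow> finite (fst a) \<Longrightarrow> finite (fst b) \<Longrightarrow>
   kdist2 K a b = kip K (csub a b) (csub a b)"
  unfolding kdist2_def
  by (simp add: kip_csub_left kip_csub_right kip_sym[of K b a])

lemma kdist2_nonneg: "pos_def_kernel K \<Longrightarrow> finite (fst a) \<Longrightarrow> finite (fst b) \<Longrightarrow> 0 \<le> kdist2 K a b"
  by (simp add: kdist2_csub kip_nonneg)

lemma cn_csub: "pos_def_kernel K \<Longrightarrow> finite (fst a) \<Longrightarrow> finite (fst b) \<Longrightarrow> cn K (csub a b) = sqrt (kdist2 K a b)"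
  by (simp add: cn_def kdist2_csub)

lemma quad_cs:
  fixes A B C :: real
  assumes h: "\<forall>t. 0 \<le> A - 2*t*C + t^2*B" and B: "0 \<le> B"
  shows "C^2 \<le> A*B"
proof (cases "B = 0")
  case True
  show ?thesis
  proof (cases "C = 0")
    case False
    have "0 \<le> A - 2*((A+1)/(2*C))*C + ((A+1)/(2*C))^2*B" using h by blast
    then show ?thesis using False True by (simp add: field_simps)
  qed (simp add: True)
next
  case False
  then have Bp: "B > 0" using B by simp
  have "0 \<le> A - 2*(C/B)*C + (C/B)^2*B" using h by blast
  also have "A - 2*(C/B)*C + (C/B)^2*B = A - C^2/B" using Bp by (simp add: field_simps power2_eq_square)
  finally have "C^2/B \<le> A" by simp
  then show ?thesis using Bp by (simp add: field_simps mult.commute)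
qed

lemma kip_cs: "pos_def_kernel K \<Longrightarrow> finite (fst a) \<Longrightarrow> finite (fst b) \<Longrightarrow> \<bar>kip K a b\<bar> \<le> cn K a * cn K b"
proof -
  assume pd: "pos_def_kernel K" and f: "finite (fst a)" "finite (fst b)"
  have "\<forall>t. 0 \<le> kip K a a - 2*t*kip K a b + t^2 * kip K b b"
  proof
    fix t
    have "0 \<le> kip K (csub a (csc t b)) (csub a (csc t b))" using f pd by (intro kip_nonneg) auto
    also have "\<dots> = kip K a a - 2*t*kip K a b + t^2 * kip K b b"
      using f pd by (simp add: kip_csub_left kip_csub_right kip_csc_left kip_csc_right kip_sym[of K b a]
            power2_eq_square algebra_simps)
    finally show "0 \<le> kip K a a - 2*t*kip K a b + t^2 * kip K b b" .
  qed
  then have "(kip K a b)^2 \<le> kip K a a * kip K b b"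
    using quad_cs kip_nonneg[OF pd f(2)] by blast
  then have "sqrt ((kip K a b)^2) \<le> sqrt (kip K a a * kip K b b)" by (rule real_sqrt_le_mono)
  then show ?thesis by (simp add: cn_def real_sqrt_mult)
qed

lemma tri_real:
  fixes sA sB C D :: real
  assumes "0 \<le> sA" "0 \<le> sB" "\<bar>C\<bar> \<le> sA * sB" "D = sA^2 - 2*C + sB^2"
  shows "sqrt D \<le> sA + sB \<and> \<bar>sA - sB\<bar> \<le> sqrt D"
proof -
  have a: "(sA - sB)^2 \<le> D" and b: "D \<le> (sA + sB)^2" using assms by (auto simp: power2_eq_square algebra_simps abs_le_iff)
  have 1: "sqrt ((sA - sB)^2) \<le> sqrt D" using a by (rule real_sqrt_le_mono)
  have 2: "sqrt D \<le> sqrt ((sA + sB)^2)" using b by (rule real_sqrt_le_mono)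
  show ?thesis using 1 2 assms(1,2) unfolding real_sqrt_abs by simp
qed

lemma cn_tri: "pos_def_kernel K \<Longrightarrow> finite (fst a) \<Longrightarrow> finite (fst b) \<Longrightarrow>
  cn K (csub a b) \<le> cn K a + cn K b \<and> \<bar>cn K a - cn K b\<bar> \<le> cn K (csub a b)"
proof -
  assume pd: "pos_def_kernel K" and f: "finite (fst a)" "finite (fst b)"
  have D: "kip K (csub a b) (csub a b) = (cn K a)^2 - 2 * kip K a b + (cn K b)^2"
    using f pd kip_nonneg[OF pd f(1)] kip_nonneg[OF pd f(2)]
    by (simp add: cn_def kip_csub_left kip_csub_right kip_sym[of K b a])
  have n: "0 \<le> cn K a" "0 \<le> cn K b" by (simp_all add: cn_def kip_nonneg pd f)
  from tri_real[OF n kip_cs[OF pd f] D] show ?thesis by (simp only: cn_def[of K "csub a b"])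
qed

lemma kip_U: "finite U \<Longrightarrow> fst a \<subseteq> U \<Longrightarrow> fst b \<subseteq> U \<Longrightarrow>
   kip K a b = (\<Sum>y\<in>U. ce a y * (\<Sum>z\<in>U. ce b z * K y z))"
  by (simp add: kip_left sum_ce)

lemma kip_ce_cong: "finite (fst a) \<Longrightarrow> finite (fst b) \<Longrightarrow> finite (fst a') \<Longrightarrow> finite (fst b') \<Longrightarrow>
   ce a = ce a' \<Longrightarrow> ce b = ce b' \<Longrightarrow> kip K a b = kip K a' b'"
proof -
  assume f: "finite (fst a)" "finite (fst b)" "finite (fst a')" "finite (fst b')" and e: "ce a = ce a'" "ce b = ce b'"
  let ?U = "fst a \<union> fst b \<union> fst a' \<union> fst b'"
  have "kip K a b = (\<Sum>y\<in>?U. ce a y * (\<Sum>z\<in>?U. ce b z * K y z))" using f by (intro kip_U) auto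
  also have "\<dots> = kip K a' b'" using f e by (subst kip_U[of ?U]) auto
  finally show ?thesis .
qed

lemma kfun_csub: "finite (fst a) \<Longrightarrow> finite (fst b) \<Longrightarrow> kfun K S (csub a b) x = kfun K S a x - kfun K S b x"
proof -
  assume f: "finite (fst a)" "finite (fst b)"
  have "(\<Sum>y\<in>fst a \<union> fst b. (ce a y - ce b y) * K x y) =
     (\<Sum>y\<in>fst a \<union> fst b. ce a y * K x y) - (\<Sum>y\<in>fst a \<union> fst b. ce b y * K x y)"
    by (simp add: left_diff_distrib sum_subtractf)
  also have "\<dots> = (\<Sum>y\<in>fst a. snd a y * K x y) - (\<Sum>y\<in>fst b. snd b y * K x y)"
    using f by (simp add: sum_ce)
  finally show ?thesis by (simp add: kfun_def csub_def)
qed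

lemma kip_kfun: "pos_def_kernel K \<Longrightarrow> fst b \<subseteq> S \<Longrightarrow> kip K a b = (\<Sum>z\<in>fst b. snd b z * kfun K S a z)"
proof -
  assume pd: "pos_def_kernel K" and bS: "fst b \<subseteq> S"
  have "kip K a b = kip K b a" using pd by (rule kip_sym)
  also have "\<dots> = (\<Sum>z\<in>fst b. snd b z * kfun K S a z)"
    unfolding kip_left kfun_def using bS by (intro sum.cong refl) auto
  finally show ?thesis .
qed


lemma approx_fin: "approx_seq K S h a \<Longrightarrow> finite (fst (a n)) \<and> fst (a n) \<subseteq> S"
  by (simp add: approx_seq_def)

lemma approx_lim: "approx_seq K S h a \<Longrightarrow> (\<lambda>n. kfun K S (a n) x) \<longlonglongrightarrow> h x"
  by (simp add: approx_seq_def)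

lemma approx_cauchy: "approx_seq K S h a \<Longrightarrow> e > 0 \<Longrightarrow> \<exists>N. \<forall>m\<ge>N. \<forall>n\<ge>N. kdist2 K (a m) (a n) < e"
  by (simp add: approx_seq_def)

lemma AS1:
  assumes pd: "pos_def_kernel K" and a: "approx_seq K S h a" and bS: "fst b \<subseteq> S"
  shows "(\<lambda>n. kip K (a n) b) \<longlonglongrightarrow> (\<Sum>z\<in>fst b. snd b z * h z)"
proof -
  have "(\<lambda>n. \<Sum>z\<in>fst b. snd b z * kfun K S (a n) z) \<longlonglongrightarrow> (\<Sum>z\<in>fst b. snd b z * h z)"
    by (intro tendsto_sum tendsto_mult_left approx_lim[OF a])
  then show ?thesis using kip_kfun[OF pd bS] by simp
qed

lemma sqrt_lt_of_sq: "0 \<le> x \<Longrightarrow> x < d^2 \<Longrightarrow> 0 < d \<Longrightarrow> sqrt x < (d::real)"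
proof -
  assume "0 \<le> x" "x < d^2" "0 < d"
  then have "sqrt x < sqrt (d^2)" by (intro real_sqrt_less_mono)
  then show ?thesis using \<open>0 < d\<close> by simp
qed

lemma AS2:
  assumes pd: "pos_def_kernel K" and a: "approx_seq K S h a"
  shows "convergent (\<lambda>n. cn K (a n))"
proof (rule Cauchy_convergent, rule CauchyI)
  fix e :: real assume e: "0 < e"
  obtain N where N: "\<forall>m\<ge>N. \<forall>n\<ge>N. kdist2 K (a m) (a n) < e^2"
    using approx_cauchy[OF a, of "e^2"] e by auto
  have "norm (cn K (a m) - cn K (a n)) < e" if "m \<ge> N" "n \<ge> N" for m n
  proof -
    have f: "finite (fst (a m))" "finite (fst (a n))" using approx_fin[OF a] by auto
    have "norm (cn K (a m) - cn K (a n)) \<le> cn K (csub (a m) (a n))" using cn_tri[OF pd f] by simp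
    also have "\<dots> = sqrt (kdist2 K (a m) (a n))" using cn_csub[OF pd f] .
    also have "\<dots> < e" using N[rule_format, OF that] kdist2_nonneg[OF pd f] e by (intro sqrt_lt_of_sq) simp_all
    finally show ?thesis .
  qed
  then show "\<exists>M. \<forall>m\<ge>M. \<forall>n\<ge>M. norm (cn K (a m) - cn K (a n)) < e" by blast
qed

lemma cn_bounded:
  assumes pd: "pos_def_kernel K" and a: "approx_seq K S h a"
  obtains M where "M > 0" "\<forall>n. cn K (a n) \<le> M"
proof -
  have "Bseq (\<lambda>n. cn K (a n))" using AS2[OF pd a] by (rule convergent_imp_Bseq)
  then have "\<exists>M>0. \<forall>n. norm (cn K (a n)) \<le> M" by (rule BseqE) blast
  then obtain M where "M > 0" "\<forall>n. norm (cn K (a n)) \<le> M" by blast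
  then have "\<forall>n. cn K (a n) \<le> M" by (simp add: abs_le_iff)
  then show ?thesis using that \<open>M > 0\<close> by blast
qed

lemma cn_nonneg: "pos_def_kernel K \<Longrightarrow> finite (fst a) \<Longrightarrow> 0 \<le> cn K a" by (simp add: cn_def kip_nonneg)

lemma AS3:
  assumes pd: "pos_def_kernel K" and a: "approx_seq K S h a" and b: "approx_seq K S h b"
  shows "(\<lambda>n. kdist2 K (a n) (b n)) \<longlonglongrightarrow> 0"
proof -
  define D where "D n = csub (a n) (b n)" for n
  have fa: "finite (fst (a n))" "fst (a n) \<subseteq> S" for n using approx_fin[OF a] by auto
  have fb: "finite (fst (b n))" "fst (b n) \<subseteq> S" for n using approx_fin[OF b] by auto
  have fD: "finite (fst (D n))" "fst (D n) \<subseteq> S" for n using fa fb by (auto simp: D_def)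
  have kd: "kdist2 K (a n) (b n) = kip K (D n) (D n)" for n
    using kdist2_csub[OF pd fa(1) fb(1)] by (simp add: D_def)
  obtain Ma where Ma: "Ma > 0" "\<forall>n. cn K (a n) \<le> Ma" using cn_bounded[OF pd a] by blast
  obtain Mb where Mb: "Mb > 0" "\<forall>n. cn K (b n) \<le> Mb" using cn_bounded[OF pd b] by blast
  define M where "M = Ma + Mb"
  have M0: "M > 0" using Ma Mb by (simp add: M_def)
  have bD: "cn K (D n) \<le> M" for n
    using cn_tri[OF pd fa(1)[of n] fb(1)[of n]] Ma(2)[rule_format, of n] Mb(2)[rule_format, of n]
    unfolding M_def D_def by linarith
  have cD: "cn K (csub (D m) (D n)) \<le> sqrt (kdist2 K (a m) (a n)) + sqrt (kdist2 K (b m) (b n))" for m n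
  proof -
    have "kip K (csub (D m) (D n)) (csub (D m) (D n)) =
          kip K (csub (csub (a m) (a n)) (csub (b m) (b n))) (csub (csub (a m) (a n)) (csub (b m) (b n)))"
      using fa(1) fb(1) by (intro kip_ce_cong) (simp_all add: D_def ce_csub fun_eq_iff)
    then have "cn K (csub (D m) (D n)) = cn K (csub (csub (a m) (a n)) (csub (b m) (b n)))"
      by (simp add: cn_def)
    also have "\<dots> \<le> cn K (csub (a m) (a n)) + cn K (csub (b m) (b n))"
      using cn_tri[OF pd, of "csub (a m) (a n)" "csub (b m) (b n)"] fa(1)[of m] fa(1)[of n] fb(1)[of m] fb(1)[of n] by simp
    also have "\<dots> = sqrt (kdist2 K (a m) (a n)) + sqrt (kdist2 K (b m) (b n))"
      using cn_csub pd fa fb by metis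
    finally show ?thesis .
  qed
  have lim0: "(\<lambda>n. kip K (D n) (D N)) \<longlonglongrightarrow> 0" for N
  proof -
    have z: "(\<lambda>n. kfun K S (D n) z) \<longlonglongrightarrow> 0" for z
    proof -
      have "(\<lambda>n. kfun K S (a n) z - kfun K S (b n) z) \<longlonglongrightarrow> h z - h z"
        by (intro tendsto_diff approx_lim[OF a] approx_lim[OF b])
      then show ?thesis using kfun_csub[OF fa(1) fb(1)] by (simp add: D_def)
    qed
    have "(\<lambda>n. \<Sum>z\<in>fst (D N). snd (D N) z * kfun K S (D n) z) \<longlonglongrightarrow> (\<Sum>z\<in>fst (D N). snd (D N) z * 0)"
      by (intro tendsto_sum tendsto_mult_left z)
    then show ?thesis using kip_kfun[OF pd fD(2)] by simp
  qed
  show ?thesis unfolding kd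
  proof (rule LIMSEQ_I)
    fix e :: real assume e: "0 < e"
    define d where "d = e / (4 * M)"
    have d0: "d > 0" using e M0 by (simp add: d_def)
    obtain N1 where N1: "\<forall>m\<ge>N1. \<forall>n\<ge>N1. kdist2 K (a m) (a n) < d^2"
      using approx_cauchy[OF a, of "d^2"] d0 by auto
    obtain N2 where N2: "\<forall>m\<ge>N2. \<forall>n\<ge>N2. kdist2 K (b m) (b n) < d^2"
      using approx_cauchy[OF b, of "d^2"] d0 by auto
    define N where "N = max N1 N2"
    obtain N3 where N3: "\<forall>n\<ge>N3. norm (kip K (D n) (D N) - 0) < e/2"
      using LIMSEQ_D[OF lim0[of N], of "e/2"] e by auto
    have "norm (kip K (D n) (D n) - 0) < e" if n: "n \<ge> max N N3" for n
    proof -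
      have s1: "sqrt (kdist2 K (a n) (a N)) < d"
        using N1[rule_format, of n N] n kdist2_nonneg[OF pd fa(1)[of n] fa(1)[of N]] d0 by (intro sqrt_lt_of_sq) (simp_all add: N_def)
      have s2: "sqrt (kdist2 K (b n) (b N)) < d"
        using N2[rule_format, of n N] n kdist2_nonneg[OF pd fb(1)[of n] fb(1)[of N]] d0 by (intro sqrt_lt_of_sq) (simp_all add: N_def)
      have eq: "kip K (D n) (D n) = kip K (D n) (csub (D n) (D N)) + kip K (D n) (D N)"
        using kip_csub_right[OF pd fD(1) fD(1)] by simp
      have "\<bar>kip K (D n) (csub (D n) (D N))\<bar> \<le> cn K (D n) * cn K (csub (D n) (D N))"
        using kip_cs[OF pd fD(1)[of n], of "csub (D n) (D N)"] fD(1)[of n] fD(1)[of N] by simp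
      also have "\<dots> \<le> M * (2*d)"
        using bD[of n] cD[of n N] s1 s2 cn_nonneg[OF pd fD(1)[of n]]
        using M0 by (intro mult_mono) (simp_all add: cn_nonneg[OF pd] fD(1))
      also have "\<dots> = e/2" using M0 by (simp add: d_def)
      finally have "\<bar>kip K (D n) (csub (D n) (D N))\<bar> \<le> e/2" .
      moreover have "\<bar>kip K (D n) (D N)\<bar> < e/2" using N3[rule_format, of n] n by simp
      ultimately show ?thesis using eq by simp
    qed
    then show "\<exists>N. \<forall>n\<ge>N. norm (kip K (D n) (D n) - 0) < e" by blast
  qed
qed


lemma AS4:
  assumes pd: "pos_def_kernel K" and a: "approx_seq K S h a" and a': "approx_seq K S h a'"
    and b: "approx_seq K S g b" and b': "approx_seq K S g b'"
  shows "(\<lambda>n. kip K (a n) (b n) - kip K (a' n) (b' n)) \<longlonglongrightarrow> 0"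
proof (rule Lim_null_comparison)
  have fa: "finite (fst (a n))" "finite (fst (a' n))" "finite (fst (b n))" "finite (fst (b' n))" for n
    using approx_fin[OF a] approx_fin[OF a'] approx_fin[OF b] approx_fin[OF b'] by auto
  show "\<forall>\<^sub>F n in sequentially. norm (kip K (a n) (b n) - kip K (a' n) (b' n)) \<le>
      sqrt (kdist2 K (a n) (a' n)) * cn K (b n) + cn K (a' n) * sqrt (kdist2 K (b n) (b' n))"
  proof (rule always_eventually, rule allI)
    fix n
    have eq: "kip K (a n) (b n) - kip K (a' n) (b' n) = kip K (csub (a n) (a' n)) (b n) + kip K (a' n) (csub (b n) (b' n))"
      using kip_csub_left[OF fa(1)[of n] fa(2)[of n], where K=K and c="b n"] kip_csub_right[OF pd fa(3)[of n] fa(4)[of n], where c="a' n"] by simp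
    have 1: "\<bar>kip K (csub (a n) (a' n)) (b n)\<bar> \<le> sqrt (kdist2 K (a n) (a' n)) * cn K (b n)"
      using kip_cs[OF pd, of "csub (a n) (a' n)" "b n"] cn_csub[OF pd fa(1)[of n] fa(2)[of n]] fa(1)[of n] fa(2)[of n] fa(3)[of n] by simp
    have 2: "\<bar>kip K (a' n) (csub (b n) (b' n))\<bar> \<le> cn K (a' n) * sqrt (kdist2 K (b n) (b' n))"
      using kip_cs[OF pd, of "a' n" "csub (b n) (b' n)"] cn_csub[OF pd fa(3)[of n] fa(4)[of n]] fa(2)[of n] fa(3)[of n] fa(4)[of n] by simp
    show "norm (kip K (a n) (b n) - kip K (a' n) (b' n)) \<le>
      sqrt (kdist2 K (a n) (a' n)) * cn K (b n) + cn K (a' n) * sqrt (kdist2 K (b n) (b' n))"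
      using 1 2 eq by simp
  qed
  obtain Lb where Lb: "(\<lambda>n. cn K (b n)) \<longlonglongrightarrow> Lb" using AS2[OF pd b] by (auto simp: convergent_def)
  obtain La where La: "(\<lambda>n. cn K (a' n)) \<longlonglongrightarrow> La" using AS2[OF pd a'] by (auto simp: convergent_def)
  have s1: "(\<lambda>n. sqrt (kdist2 K (a n) (a' n))) \<longlonglongrightarrow> 0"
    using tendsto_real_sqrt[OF AS3[OF pd a a']] by simp
  have s2: "(\<lambda>n. sqrt (kdist2 K (b n) (b' n))) \<longlonglongrightarrow> 0"
    using tendsto_real_sqrt[OF AS3[OF pd b b']] by simp
  have "(\<lambda>n. sqrt (kdist2 K (a n) (a' n)) * cn K (b n) + cn K (a' n) * sqrt (kdist2 K (b n) (b' n)))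
      \<longlonglongrightarrow> 0 * Lb + La * 0"
    by (intro tendsto_add tendsto_mult s1 s2 La Lb)
  then show "(\<lambda>n. sqrt (kdist2 K (a n) (a' n)) * cn K (b n) + cn K (a' n) * sqrt (kdist2 K (b n) (b' n)))
      \<longlonglongrightarrow> 0" by simp
qed

lemma RI:
  assumes pd: "pos_def_kernel K" and a: "approx_seq K S h a" and b: "approx_seq K S g b"
    and lim: "(\<lambda>n. kip K (a n) (b n)) \<longlonglongrightarrow> r"
  shows "rkhs_inner K S h g = r"
  unfolding rkhs_inner_def
proof (rule the_equality)
  show "\<forall>a' b'. approx_seq K S h a' \<longrightarrow> approx_seq K S g b' \<longrightarrow> (\<lambda>n. kip K (a' n) (b' n)) \<longlonglongrightarrow> r"
  proof (intro allI impI)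
    fix a' b' assume a': "approx_seq K S h a'" and b': "approx_seq K S g b'"
    have "(\<lambda>n. kip K (a n) (b n) - (kip K (a n) (b n) - kip K (a' n) (b' n))) \<longlonglongrightarrow> r - 0"
      by (intro tendsto_diff lim AS4[OF pd a a' b b'])
    then show "(\<lambda>n. kip K (a' n) (b' n)) \<longlonglongrightarrow> r" by simp
  qed
next
  fix r' assume "\<forall>a' b'. approx_seq K S h a' \<longrightarrow> approx_seq K S g b' \<longrightarrow> (\<lambda>n. kip K (a' n) (b' n)) \<longlonglongrightarrow> r'"
  then have "(\<lambda>n. kip K (a n) (b n)) \<longlonglongrightarrow> r'" using a b by blast
  then show "r' = r" using lim by (rule LIMSEQ_unique)
qed

lemma approx_const:
  assumes "finite (fst p)" "fst p \<subseteq> S"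
  shows "approx_seq K S (kfun K S p) (\<lambda>n. p)"
  using assms unfolding approx_seq_def kdist2_def by auto

lemma kcol_kfun: "kcol K S y = kfun K S ({y}, \<lambda>_. 1)"
  by (simp add: kcol_def kfun_def fun_eq_iff)

lemma approx_sub:
  assumes pd: "pos_def_kernel K" and a: "approx_seq K S h a" and p: "finite (fst p)" "fst p \<subseteq> S"
  shows "approx_seq K S (\<lambda>x. h x - kfun K S p x) (\<lambda>n. csub (a n) p)"
proof -
  have fa: "finite (fst (a n))" "fst (a n) \<subseteq> S" for n using approx_fin[OF a] by auto
  have kd: "kdist2 K (csub (a m) p) (csub (a n) p) = kdist2 K (a m) (a n)" for m n
  proof -
    have "kdist2 K (csub (a m) p) (csub (a n) p) = kip K (csub (csub (a m) p) (csub (a n) p)) (csub (csub (a m) p) (csub (a n) p))"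
      using kdist2_csub[OF pd, of "csub (a m) p" "csub (a n) p"] fa(1)[of m] fa(1)[of n] p(1) by simp
    also have "\<dots> = kip K (csub (a m) (a n)) (csub (a m) (a n))"
      using fa(1)[of m] fa(1)[of n] p(1) by (intro kip_ce_cong) (simp_all add: ce_csub fun_eq_iff)
    also have "\<dots> = kdist2 K (a m) (a n)"
      using kdist2_csub[OF pd fa(1)[of m] fa(1)[of n]] by simp
    finally show ?thesis .
  qed
  have lim: "(\<lambda>n. kfun K S (csub (a n) p) x) \<longlonglongrightarrow> h x - kfun K S p x" for x
  proof -
    have "(\<lambda>n. kfun K S (a n) x - kfun K S p x) \<longlonglongrightarrow> h x - kfun K S p x"
      by (intro tendsto_diff approx_lim[OF a] tendsto_const)
    then show ?thesis using kfun_csub[OF fa(1) p(1)] by simp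
  qed
  show ?thesis unfolding approx_seq_def
    using fa p kd lim approx_cauchy[OF a] by auto
qed

lemma RI_col:
  assumes pd: "pos_def_kernel K" and a: "approx_seq K S h a" and p: "finite (fst p)" "fst p \<subseteq> S"
    and y: "y \<in> S"
  shows "rkhs_inner K S (\<lambda>x. h x - kfun K S p x) (kcol K S y) = h y - kfun K S p y"
proof -
  have c: "approx_seq K S (kcol K S y) (\<lambda>n. ({y}, \<lambda>_. 1))"
    unfolding kcol_kfun using y by (intro approx_const) auto
  have s: "approx_seq K S (\<lambda>x. h x - kfun K S p x) (\<lambda>n. csub (a n) p)" by (rule approx_sub[OF pd a p])
  have "(\<lambda>n. kip K (csub (a n) p) ({y}, \<lambda>_. 1)) \<longlonglongrightarrow> (\<Sum>z\<in>{y}. 1 * (h z - kfun K S p z))"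
    using AS1[OF pd s, of "({y}, \<lambda>_. 1)"] y by simp
  then show ?thesis using RI[OF pd s c] by simp
qed


lemma sum_delta_eq: "finite F \<Longrightarrow> x \<in> F \<Longrightarrow> (\<Sum>z\<in>F. c z * delta x z) = c x"
  by (simp add: delta_def if_distrib[of "\<lambda>t. c _ * t"] cong: if_cong)

lemma inj_KF:
  assumes pd: "pos_def_kernel K" and dl: "\<forall>x\<in>S. delta x \<in> rkhs K S"
    and F: "finite F" "F \<subseteq> S" and hd: "\<forall>y\<in>F. (\<Sum>z\<in>F. K y z * d z) = 0" and x: "x \<in> F"
  shows "d x = 0"
proof -
  have kp: "kfun K S (F, d) z = 0" if "z \<in> F" for z
  proof -
    have "kfun K S (F, d) z = (\<Sum>y\<in>F. K z y * d y)" using that F by (simp add: kfun_def mult.commute subset_iff)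
    then show ?thesis using hd that by simp
  qed
  have pp: "kip K (F, d) (F, d) = 0"
    using kip_kfun[OF pd, of "(F, d)" S "(F, d)"] F kp by simp
  obtain a where a: "approx_seq K S (delta x) a" using dl x F unfolding rkhs_def by blast
  have fa: "finite (fst (a n))" for n using approx_fin[OF a] by auto
  have lim: "(\<lambda>n. kip K (a n) (F, d)) \<longlonglongrightarrow> d x"
    using AS1[OF pd a, of "(F, d)"] F sum_delta_eq[OF F(1) x, of d] by simp
  have z: "kip K (a n) (F, d) = 0" for n
  proof -
    have "\<bar>kip K (a n) (F, d)\<bar> \<le> cn K (a n) * cn K (F, d)" using kip_cs[OF pd fa[of n], of "(F, d)"] F by simp
    also have "cn K (F, d) = 0" using pp by (simp add: cn_def)
    finally show ?thesis by simp
  qed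
  have "(\<lambda>n. kip K (a n) (F, d)) \<longlonglongrightarrow> 0" using z by simp
  then show ?thesis using lim LIMSEQ_unique by metis
qed

lemma ex_sol:
  assumes pd: "pos_def_kernel K" and dl: "\<forall>x\<in>S. delta x \<in> rkhs K S"
    and F: "finite F" "F \<subseteq> S"
  shows "\<exists>u. \<forall>y\<in>F. (\<Sum>z\<in>F. K y z * u z) = v y"
  using F
proof (induction F arbitrary: v rule: finite_induct)
  case empty
  then show ?case by simp
next
  case (insert a F)
  have FS: "F \<subseteq> S" and aS: "a \<in> S" using insert by auto
  obtain u0 where u0: "\<forall>y\<in>F. (\<Sum>z\<in>F. K y z * u0 z) = v y" using insert FS by blast
  obtain w where w: "\<forall>y\<in>F. (\<Sum>z\<in>F. K y z * w z) = K y a" using insert.IH[OF FS, of "\<lambda>y. K y a"] by blast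
  define \<rho> where "\<rho> = K a a - (\<Sum>z\<in>F. K a z * w z)"
  have \<rho>: "\<rho> \<noteq> 0"
  proof
    assume r0: "\<rho> = 0"
    define dd where "dd z = (if z = a then 1 else - w z)" for z
    have s: "(\<Sum>z\<in>insert a F. K y z * dd z) = K y a - (\<Sum>z\<in>F. K y z * w z)" for y
    proof -
      have "(\<Sum>z\<in>insert a F. K y z * dd z) = K y a + (\<Sum>z\<in>F. K y z * dd z)"
        using insert by (simp add: dd_def)
      also have "(\<Sum>z\<in>F. K y z * dd z) = (\<Sum>z\<in>F. - (K y z * w z))"
        using insert by (intro sum.cong) (auto simp: dd_def)
      finally show ?thesis by (simp add: sum_negf)
    qed
    have "\<forall>y\<in>insert a F. (\<Sum>z\<in>insert a F. K y z * dd z) = 0"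
      using s w r0 by (auto simp: \<rho>_def)
    then have "dd a = 0" using inj_KF[OF pd dl, of "insert a F" dd a] insert by auto
    then show False by (simp add: dd_def)
  qed
  define t where "t = (v a - (\<Sum>z\<in>F. K a z * u0 z)) / \<rho>"
  define u where "u z = (if z = a then t else u0 z - t * w z)" for z
  have gen: "(\<Sum>z\<in>insert a F. K y z * u z) = t * (K y a - (\<Sum>z\<in>F. K y z * w z)) + (\<Sum>z\<in>F. K y z * u0 z)" for y
  proof -
    have "(\<Sum>z\<in>insert a F. K y z * u z) = K y a * t + (\<Sum>z\<in>F. K y z * u z)"
      using insert by (simp add: u_def)
    also have "(\<Sum>z\<in>F. K y z * u z) = (\<Sum>z\<in>F. K y z * u0 z - t * (K y z * w z))"
      using insert by (intro sum.cong) (auto simp: u_def algebra_simps)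
    also have "\<dots> = (\<Sum>z\<in>F. K y z * u0 z) - t * (\<Sum>z\<in>F. K y z * w z)"
      by (simp add: sum_subtractf sum_distrib_left)
    finally show ?thesis by (simp add: algebra_simps)
  qed
  have "\<forall>y\<in>insert a F. (\<Sum>z\<in>insert a F. K y z * u z) = v y"
  proof
    fix y assume y: "y \<in> insert a F"
    show "(\<Sum>z\<in>insert a F. K y z * u z) = v y"
    proof (cases "y = a")
      case True
      then show ?thesis using gen[of a] \<rho> by (simp add: t_def \<rho>_def[symmetric])
    next
      case False
      then have "y \<in> F" using y by simp
      then show ?thesis using gen[of y] u0 w by simp
    qed
  qed
  then show ?case by blast
qed


lemma kinv:
  assumes pd: "pos_def_kernel K" and dl: "\<forall>x\<in>S. delta x \<in> rkhs K S"
    and F: "finite F" "F \<subseteq> S"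
  shows "(\<forall>x. x \<notin> F \<longrightarrow> kmat_inv_apply K F v x = 0) \<and>
         (\<forall>x\<in>F. (\<Sum>y\<in>F. K x y * kmat_inv_apply K F v y) = v x)"
proof -
  obtain u where u: "\<forall>y\<in>F. (\<Sum>z\<in>F. K y z * u z) = v y" using ex_sol[OF pd dl F] by blast
  define u' where "u' x = (if x \<in> F then u x else 0)" for x
  have P: "(\<forall>x. x \<notin> F \<longrightarrow> u' x = 0) \<and> (\<forall>x\<in>F. (\<Sum>y\<in>F. K x y * u' y) = v x)"
  proof -
    have "(\<Sum>y\<in>F. K x y * u' y) = (\<Sum>y\<in>F. K x y * u y)" for x by (intro sum.cong) (auto simp: u'_def)
    then show ?thesis using u by (auto simp: u'_def)
  qed
  have ex: "\<exists>!u. (\<forall>x. x \<notin> F \<longrightarrow> u x = 0) \<and> (\<forall>x\<in>F. (\<Sum>y\<in>F. K x y * u y) = v x)"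
  proof (rule ex1I[of _ u'])
    show "(\<forall>x. x \<notin> F \<longrightarrow> u' x = 0) \<and> (\<forall>x\<in>F. (\<Sum>y\<in>F. K x y * u' y) = v x)" by (rule P)
  next
    fix w assume w: "(\<forall>x. x \<notin> F \<longrightarrow> w x = 0) \<and> (\<forall>x\<in>F. (\<Sum>y\<in>F. K x y * w y) = v x)"
    have "\<forall>y\<in>F. (\<Sum>z\<in>F. K y z * (w z - u' z)) = 0"
      using w P by (simp add: right_diff_distrib sum_subtractf)
    then have "w x - u' x = 0" if "x \<in> F" for x using inj_KF[OF pd dl F, of "\<lambda>z. w z - u' z" x] that by simp
    then show "w = u'" using w P by (metis eq_iff_diff_eq_0 ext)
  qed
  show ?thesis unfolding kmat_inv_apply_def by (rule theI'[OF ex])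
qed

lemma kfun_F: "F \<subseteq> S \<Longrightarrow> y \<in> F \<Longrightarrow> kfun K S (F, c) y = (\<Sum>z\<in>F. K y z * c z)"
  by (auto simp: kfun_def mult.commute)

lemma proj_eq:
  assumes pd: "pos_def_kernel K" and dl: "\<forall>x\<in>S. delta x \<in> rkhs K S" and h: "h \<in> rkhs K S"
    and F: "finite F" "F \<subseteq> S"
  shows "proj K S F h = kfun K S (F, kmat_inv_apply K F h)"
proof -
  define c where "c = kmat_inv_apply K F h"
  obtain a where a: "approx_seq K S h a" using h unfolding rkhs_def by blast
  have Kc: "\<forall>x\<in>F. (\<Sum>y\<in>F. K x y * c y) = h x" using kinv[OF pd dl F, of h] by (simp add: c_def)
  show ?thesis unfolding proj_def c_def[symmetric]
  proof (rule the_equality)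
    show "kfun K S (F, c) \<in> kspan K S F \<and> (\<forall>y\<in>F. rkhs_inner K S (\<lambda>x. h x - kfun K S (F, c) x) (kcol K S y) = 0)"
    proof
      show "kfun K S (F, c) \<in> kspan K S F" by (auto simp: kspan_def)
      show "\<forall>y\<in>F. rkhs_inner K S (\<lambda>x. h x - kfun K S (F, c) x) (kcol K S y) = 0"
      proof
        fix y assume y: "y \<in> F"
        have "rkhs_inner K S (\<lambda>x. h x - kfun K S (F, c) x) (kcol K S y) = h y - kfun K S (F, c) y"
          using RI_col[OF pd a, of "(F, c)" y] F y by auto
        also have "\<dots> = 0" using kfun_F[OF F(2) y, of K c] Kc y by simp
        finally show "rkhs_inner K S (\<lambda>x. h x - kfun K S (F, c) x) (kcol K S y) = 0" .
      qed
    qed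
  next
    fix g assume g: "g \<in> kspan K S F \<and> (\<forall>y\<in>F. rkhs_inner K S (\<lambda>x. h x - g x) (kcol K S y) = 0)"
    then obtain c' where c': "g = kfun K S (F, c')" by (auto simp: kspan_def)
    have hc': "(\<Sum>z\<in>F. K y z * c' z) = h y" if y: "y \<in> F" for y
    proof -
      have "0 = rkhs_inner K S (\<lambda>x. h x - kfun K S (F, c') x) (kcol K S y)" using g y c' by simp
      also have "\<dots> = h y - kfun K S (F, c') y" using RI_col[OF pd a, of "(F, c')" y] F y by auto
      finally show ?thesis using kfun_F[OF F(2) y, of K c'] by simp
    qed
    have "\<forall>y\<in>F. (\<Sum>z\<in>F. K y z * (c' z - c z)) = 0"
      using hc' Kc by (simp add: right_diff_distrib sum_subtractf)
    then have "c' x - c x = 0" if "x \<in> F" for x using inj_KF[OF pd dl F, of "\<lambda>z. c' z - c z" x] that by simp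
    then show "g = kfun K S (F, c)" unfolding c' kfun_def by (auto simp: fun_eq_iff intro!: sum.cong)
  qed
qed

lemma lap_kfun:
  assumes pd: "pos_def_kernel K" and dl: "\<forall>x\<in>S. delta x \<in> rkhs K S"
    and F: "finite F" "F \<subseteq> S" and x: "x \<in> F"
  shows "laplacian K S (kfun K S (F, c)) x = c x"
proof -
  obtain a where a: "approx_seq K S (delta x) a" using dl x F unfolding rkhs_def by blast
  have "(\<lambda>n. kip K (a n) (F, c)) \<longlonglongrightarrow> c x"
    using AS1[OF pd a, of "(F, c)"] F sum_delta_eq[OF F(1) x, of c] by simp
  then have "rkhs_inner K S (delta x) (kfun K S (F, c)) = c x"
    using RI[OF pd a approx_const[of "(F, c)" S K]] F by simp
  then show ?thesis using x F by (auto simp: laplacian_def)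
qed


theorem corollary8p16:
  fixes K :: "'a \<Rightarrow> 'a \<Rightarrow> real" and S :: "'a set" and h :: "'a \<Rightarrow> real"
  assumes "pos_def_kernel K"
    and "countable S"
    and "\<forall>x\<in>S. delta x \<in> rkhs K S"
    and "h \<in> rkhs K S"
  shows "rkhs_inner K S h h =
           (SUP F\<in>{F. finite F \<and> F \<subseteq> S}. \<Sum>x\<in>F. h x * laplacian K S (proj K S F h) x)
       \<and> rkhs_inner K S h h =
           (SUP F\<in>{F. finite F \<and> F \<subseteq> S}. \<Sum>x\<in>F. h x * kmat_inv_apply K F h x)
       \<and> (\<forall>F. finite F \<and> F \<subseteq> S \<longrightarrow>
            (\<forall>x\<in>F. laplacian K S (proj K S F h) x = kmat_inv_apply K F h x))
       \<and> (\<forall>F. finite F \<and> F \<subseteq> S \<longrightarrow>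
            (\<forall>x\<in>F. (\<Sum>y\<in>F. K x y * laplacian K S (proj K S F h) y) = h x))"
proof -
  note pd = assms(1) and dl = assms(3) and h = assms(4)
  let ?I = "{F. finite F \<and> F \<subseteq> S}"
  define P where "P F = (\<Sum>x\<in>F. h x * kmat_inv_apply K F h x)" for F
  have two: "\<forall>x\<in>F. laplacian K S (proj K S F h) x = kmat_inv_apply K F h x" if F: "finite F" "F \<subseteq> S" for F
    using proj_eq[OF pd dl h F] lap_kfun[OF pd dl F] by simp
  have three: "\<forall>x\<in>F. (\<Sum>y\<in>F. K x y * laplacian K S (proj K S F h) y) = h x" if F: "finite F" "F \<subseteq> S" for F
  proof
    fix x assume x: "x \<in> F"
    have "(\<Sum>y\<in>F. K x y * laplacian K S (proj K S F h) y) = (\<Sum>y\<in>F. K x y * kmat_inv_apply K F h y)"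
      using two[OF F] by (intro sum.cong) auto
    also have "\<dots> = h x" using kinv[OF pd dl F, of h] x by simp
    finally show "(\<Sum>y\<in>F. K x y * laplacian K S (proj K S F h) y) = h x" .
  qed
  obtain a where a: "approx_seq K S h a" using h unfolding rkhs_def by blast
  have fa: "finite (fst (a n))" "fst (a n) \<subseteq> S" for n using approx_fin[OF a] by auto
  obtain L where L: "(\<lambda>n. cn K (a n)) \<longlonglongrightarrow> L" using AS2[OF pd a] by (auto simp: convergent_def)
  have kaa: "kip K (a n) (a n) = (cn K (a n))^2" for n using kip_nonneg[OF pd fa(1)[of n]] by (simp add: cn_def)
  have Hlim: "(\<lambda>n. kip K (a n) (a n)) \<longlonglongrightarrow> L^2" unfolding kaa by (intro tendsto_power L)
  have H: "rkhs_inner K S h h = L^2" by (rule RI[OF pd a a Hlim])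
  have pfacts: "kip K (F, kmat_inv_apply K F h) (F, kmat_inv_apply K F h) = P F
      \<and> (\<forall>b. fst b = F \<longrightarrow> kip K (F, kmat_inv_apply K F h) b = (\<Sum>z\<in>F. snd b z * h z))"
    if F: "finite F" "F \<subseteq> S" for F
  proof -
    define c where "c = kmat_inv_apply K F h"
    have kf: "kfun K S (F, c) z = h z" if "z \<in> F" for z
      using kfun_F[OF F(2) that, of K c] kinv[OF pd dl F, of h] that by (simp add: c_def)
    have 1: "kip K (F, c) b = (\<Sum>z\<in>F. snd b z * h z)" if "fst b = F" for b
      using kip_kfun[OF pd, of b S "(F, c)"] that F kf by simp
    have "kip K (F, c) (F, c) = (\<Sum>z\<in>F. c z * h z)" using 1[of "(F, c)"] by simp
    also have "\<dots> = P F" by (simp add: P_def c_def mult.commute)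
    finally show ?thesis using 1 by (simp add: c_def)
  qed
  have upper: "P F \<le> L^2" if F: "finite F" "F \<subseteq> S" for F
  proof -
    define p where "p = (F, kmat_inv_apply K F h)"
    have l1: "(\<lambda>n. kip K (a n) p) \<longlonglongrightarrow> P F"
      using AS1[OF pd a, of p] F by (simp add: p_def P_def mult.commute)
    have pp: "kip K p p = P F" using pfacts[OF F] unfolding p_def by (rule conjunct1)
    have "(\<lambda>n. kdist2 K (a n) p) \<longlonglongrightarrow> L^2 - 2 * P F + P F"
      unfolding kdist2_def pp by (intro tendsto_add tendsto_diff tendsto_mult Hlim l1 tendsto_const)
    moreover have "\<forall>n. 0 \<le> kdist2 K (a n) p" using kdist2_nonneg[OF pd fa(1)] F by (simp add: p_def)
    ultimately have "0 \<le> L^2 - 2 * P F + P F" by (intro LIMSEQ_le_const) auto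
    then show ?thesis by simp
  qed
  have approx: "\<exists>F\<in>?I. L^2 - e \<le> P F" if e: "e > 0" for e
  proof -
    obtain N where N: "\<forall>m\<ge>N. \<forall>n\<ge>N. kdist2 K (a m) (a n) < e" using approx_cauchy[OF a e] by blast
    define q where "q = a N"
    define F where "F = fst q"
    have F: "finite F" "F \<subseteq> S" using fa by (simp_all add: F_def q_def)
    define p where "p = (F, kmat_inv_apply K F h)"
    define \<alpha> where "\<alpha> = (\<Sum>z\<in>F. snd q z * h z)"
    have l1: "(\<lambda>m. kip K (a m) q) \<longlonglongrightarrow> \<alpha>"
      using AS1[OF pd a, of q] F by (simp add: \<alpha>_def F_def)
    have "(\<lambda>m. kdist2 K (a m) q) \<longlonglongrightarrow> L^2 - 2 * \<alpha> + kip K q q"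
      unfolding kdist2_def by (intro tendsto_add tendsto_diff tendsto_mult Hlim l1 tendsto_const)
    moreover have "\<exists>N'. \<forall>m\<ge>N'. kdist2 K (a m) q \<le> e" using N by (auto simp: q_def intro!: less_imp_le)
    ultimately have le: "L^2 - 2 * \<alpha> + kip K q q \<le> e" by (rule LIMSEQ_le_const2)
    have "0 \<le> kdist2 K p q" using kdist2_nonneg[OF pd, of p q] F fa by (simp add: p_def q_def)
    also have "kdist2 K p q = P F - 2 * \<alpha> + kip K q q"
    proof -
      have pp: "kip K p p = P F" using pfacts[OF F] unfolding p_def by (rule conjunct1)
      have pq: "kip K p q = \<alpha>" using conjunct2[OF pfacts[OF F], rule_format, of q] unfolding p_def \<alpha>_def F_def by simp
      show ?thesis unfolding kdist2_def pp pq ..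
    qed
    finally have "0 \<le> P F - 2 * \<alpha> + kip K q q" .
    then have "L^2 - e \<le> P F" using le by simp
    then show ?thesis using F by blast
  qed
  have sup: "(SUP F\<in>?I. P F) = L^2"
  proof (rule cSup_eq_non_empty)
    show "P ` ?I \<noteq> {}" by blast
    show "x \<le> L^2" if "x \<in> P ` ?I" for x using that upper by auto
    show "L^2 \<le> y" if y: "\<And>x. x \<in> P ` ?I \<Longrightarrow> x \<le> y" for y
    proof (rule field_le_epsilon)
      fix e :: real assume "0 < e"
      then obtain F where "F \<in> ?I" "L^2 - e \<le> P F" using approx by blast
      then show "L^2 \<le> y + e" using y[of "P F"] by auto
    qed
  qed
  have sup1: "(SUP F\<in>?I. \<Sum>x\<in>F. h x * laplacian K S (proj K S F h) x) = (SUP F\<in>?I. P F)"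
    using two unfolding P_def by (intro SUP_cong refl sum.cong) auto
  show ?thesis
    using H sup sup1 two three unfolding P_def by auto
qed

end
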